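(* Let $q$ be an $\varepsilon$-LDP cap-based mechanism from $\mathcal{X}$ to $\mathcal{Z}$, let $\mathbf{x}\in\mathcal{X}$, let $p$ be the uniform distribution on $\mathcal{Z}$, and let $\mathbf{z}_1,\dots,\mathbf{z}_N$ be $N$ candidates drawn from $p$, with $\theta$ the fraction of candidates in $\mathsf{Cap}_{\mathbf{x}}$. Then \[ D_{\mathrm{KL}}\big(\pi^{\mathrm{mrc}}_{\mathbf{x},\theta}\,\big\|\,\pi^{\mathrm{mmrc}}_{\mathbf{x},\theta}\big)\le\varepsilon\log e . \]
   Context: $\log$ is base 2 and the KL divergence is measured in bits. A mechanism $q$ is $\varepsilon$-LDP if $q(\mathbf{z}\mid\mathbf{x})\le e^\varepsilon q(\mathbf{z}\mid\mathbf{x}')$ for all $\mathbf{x},\mathbf{x}',\mathbf{z}$. Cap-based: $q(\mathbf{z}\mid\mathbf{x})=c_1$ if $\mathbf{z}\in\mathsf{Cap}_{\mathbf{x}}$, $=c_2$ otherwise, with constants $c_1\ge c_2$ independent of $\mathbf{x},\mathbf{z}$ and $\mathsf{Cap}_{\mathbf{x}}\subseteq\mathcal{Z}$ such that $\bar\theta=\mathbb{P}_{\mathbf{z}\sim\mathrm{Unif}(\mathcal{Z})}(\mathbf{z}\in\mathsf{Cap}_{\mathbf{x}})$ is independent of $\mathbf{x}$ and $\ge c_2/(2c_1)$. $\pi^{\mathrm{mrc}}_{\mathbf{x},\theta}(k)=\frac1N\frac{c_1}{\theta c_1+(1-\theta)c_2}$ if $\mathbf{z}_k\in\mathsf{Cap}_{\mathbf{x}}$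 and $\frac1N\frac{c_2}{\theta c_1+(1-\theta)c_2}$ otherwise. With $t_u=\frac1N\frac{c_1}{\bar\theta c_1+(1-\bar\theta)c_2}$, $t_l=\frac1N\frac{c_2}{\bar\theta c_1+(1-\bar\theta)c_2}$: $\pi^{\mathrm{mmrc}}_{\mathbf{x},\theta}=\pi^{\mathrm{mrc}}_{\mathbf{x},\theta}$ if $\theta=\bar\theta$; if $\theta<\bar\theta$, $\pi^{\mathrm{mmrc}}(k)=t_u$ for cap candidates and $\frac{1-N\theta t_u}{N(1-\theta)}$ otherwise; if $\theta>\bar\theta$, $\pi^{\mathrm{mmrc}}(k)=t_l$ for non-cap candidates and $\frac{1-N(1-\theta)t_l}{N\theta}$ otherwise. *)

theory Defs
  imports "HOL-Probability.Probability"
begin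

definition is_ldp :: "real \<Rightarrow> 'x set \<Rightarrow> 'z set \<Rightarrow> ('x \<Rightarrow> 'z \<Rightarrow> real) \<Rightarrow> bool" where
  "is_ldp \<epsilon> X Z q \<longleftrightarrow> (\<forall>x\<in>X. \<forall>x'\<in>X. \<forall>z\<in>Z. q x z \<le> exp \<epsilon> * q x' z)"

definition cap_based :: "'x set \<Rightarrow> 'z measure \<Rightarrow> ('x \<Rightarrow> 'z \<Rightarrow> real) \<Rightarrow> ('x \<Rightarrow> 'z set)
    \<Rightarrow> real \<Rightarrow> real \<Rightarrow> real \<Rightarrow> bool" where
  "cap_based X P q Cap c1 c2 \<theta>bar \<longleftrightarrow>
     0 < c2 \<and> c2 \<le> c1 \<and>
     (\<forall>x\<in>X. Cap x \<subseteq> space P \<and> Cap x \<in> sets P \<and> measure P (Cap x) = \<theta>bar) \<and>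
     (\<forall>x\<in>X. \<forall>z\<in>space P. q x z = (if z \<in> Cap x then c1 else c2)) \<and>
     \<theta>bar \<ge> c2 / (2 * c1)"

definition pi_mrc :: "('x \<Rightarrow> 'z set) \<Rightarrow> real \<Rightarrow> real \<Rightarrow> nat \<Rightarrow> (nat \<Rightarrow> 'z) \<Rightarrow> 'x \<Rightarrow> real \<Rightarrow> nat \<Rightarrow> real" where
  "pi_mrc Cap c1 c2 N zs x \<theta> k =
     (if zs k \<in> Cap x then (1 / real N) * (c1 / (\<theta> * c1 + (1 - \<theta>) * c2))
      else (1 / real N) * (c2 / (\<theta> * c1 + (1 - \<theta>) * c2)))"

definition pi_mmrc :: "('x \<Rightarrow> 'z set) \<Rightarrow> real \<Rightarrow> real \<Rightarrow> real \<Rightarrow> nat \<Rightarrow> (nat \<Rightarrow> 'z) \<Rightarrow> 'x \<Rightarrow> real \<Rightarrow> nat \<Rightarrow> real" where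
  "pi_mmrc Cap c1 c2 \<theta>bar N zs x \<theta> k =
     (let t_u = (1 / real N) * (c1 / (\<theta>bar * c1 + (1 - \<theta>bar) * c2));
          t_l = (1 / real N) * (c2 / (\<theta>bar * c1 + (1 - \<theta>bar) * c2))
      in if \<theta> = \<theta>bar then pi_mrc Cap c1 c2 N zs x \<theta> k
         else if \<theta> < \<theta>bar then
           (if zs k \<in> Cap x then t_u else (1 - real N * \<theta> * t_u) / (real N * (1 - \<theta>)))
         else
           (if zs k \<notin> Cap x then t_l else (1 - real N * (1 - \<theta>) * t_l) / (real N * \<theta>)))"

definition kl_bits :: "(nat \<Rightarrow> real) \<Rightarrow> (nat \<Rightarrow> real) \<Rightarrow> nat set \<Rightarrow> real" where
  "kl_bits p r K = (\<Sum>k\<in>K. if p k = 0 then 0 else p k * log 2 (p k / r k))"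

end

theory Submission
  imports Defs
begin

lemma kl_le:
  assumes "finite K" "\<And>k. k \<in> K \<Longrightarrow> p k > 0 \<and> r k > 0 \<and> p k / r k \<le> B"
    "sum p K = 1" "B > 0"
  shows "kl_bits p r K \<le> log 2 B"
proof -
  have "kl_bits p r K = (\<Sum>k\<in>K. p k * log 2 (p k / r k))"
    unfolding kl_bits_def using assms(2) by (intro sum.cong) auto
  also have "\<dots> \<le> (\<Sum>k\<in>K. p k * log 2 B)"
  proof (rule sum_mono)
    fix k assume k: "k \<in> K"
    then have "p k > 0" "r k > 0" "p k / r k \<le> B" using assms(2) by auto
    then have "log 2 (p k / r k) \<le> log 2 B" by (intro log_mono) auto
    then show "p k * log 2 (p k / r k) \<le> p k * log 2 B"
      using \<open>p k > 0\<close> by (intro mult_left_mono) auto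
  qed
  also have "\<dots> = log 2 B" using assms(3) by (simp add: sum_distrib_right[symmetric])
  finally show ?thesis .
qed

theorem lemma3:
  fixes X :: "'x set" and P :: "'z measure" and q :: "'x \<Rightarrow> 'z \<Rightarrow> real"
    and Cap :: "'x \<Rightarrow> 'z set" and c1 c2 \<theta>bar \<epsilon> :: real
    and N :: nat and zs :: "nat \<Rightarrow> 'z" and x :: 'x
  assumes "prob_space P"
    and "is_ldp \<epsilon> X (space P) q"
    and "cap_based X P q Cap c1 c2 \<theta>bar"
    and nondeg: "\<exists>x1\<in>X. \<exists>x2\<in>X. \<exists>z\<in>space P. z \<in> Cap x1 \<and> z \<notin> Cap x2"
    and "x \<in> X"
    and "N \<ge> 1"
    and "\<forall>k<N. zs k \<in> space P"
  shows "let \<theta> = real (card {k. k < N \<and> zs k \<in> Cap x}) / real N in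
    kl_bits (pi_mrc Cap c1 c2 N zs x \<theta>) (pi_mmrc Cap c1 c2 \<theta>bar N zs x \<theta>) {..<N}
      \<le> \<epsilon> * log 2 (exp 1)"
proof -
  from assms(3) have c2: "0 < c2" and c12: "c2 \<le> c1" and tb: "\<theta>bar \<ge> c2 / (2 * c1)"
    and capx: "measure P (Cap x) = \<theta>bar" and capq: "\<forall>x\<in>X. \<forall>z\<in>space P. q x z = (if z \<in> Cap x then c1 else c2)"
    using assms(5) unfolding cap_based_def by auto
  have tb0: "0 \<le> \<theta>bar" using capx by auto
  have tb1: "\<theta>bar \<le> 1" using capx prob_space.prob_le_1[OF assms(1)] by metis
  from nondeg obtain x1 x2 z where x12: "x1 \<in> X" "x2 \<in> X" "z \<in> space P" "z \<in> Cap x1" "z \<notin> Cap x2"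
    by blast
  have "q x1 z \<le> exp \<epsilon> * q x2 z" using assms(2) x12 unfolding is_ldp_def by auto
  then have ce: "c1 \<le> exp \<epsilon> * c2" using capq x12 by auto
  have B: "log 2 (c1 / c2) \<le> \<epsilon> * log 2 (exp 1)"
  proof -
    have "c1 / c2 \<le> exp \<epsilon>" using ce c2 by (simp add: divide_le_eq mult.commute)
    then have "log 2 (c1 / c2) \<le> log 2 (exp \<epsilon>)" using c2 c12 by (intro log_mono) auto
    also have "log 2 (exp \<epsilon>) = \<epsilon> * log 2 (exp 1)" by (simp add: log_def)
    finally show ?thesis .
  qed
  define A where "A = {k. k < N \<and> zs k \<in> Cap x}"
  define m where "m = card A"
  have finA: "finite A" unfolding A_def by auto
  have mN: "m \<le> N" unfolding m_def A_def
    using card_mono[of "{..<N}" "{k. k < N \<and> zs k \<in> Cap x}"] by auto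
  define \<theta> where "\<theta> = real m / real N"
  have N0: "real N > 0" using assms(6) by auto
  have th0: "0 \<le> \<theta>" and th1: "\<theta> \<le> 1" unfolding \<theta>_def using mN N0 by auto
  define D where "D = \<theta> * c1 + (1 - \<theta>) * c2"
  define Db where "Db = \<theta>bar * c1 + (1 - \<theta>bar) * c2"
  have "\<theta> * (c1 - c2) \<ge> 0" "(1 - \<theta>) * (c1 - c2) \<ge> 0" using th0 th1 c12 by auto
  then have D1: "c2 \<le> D" "D \<le> c1" unfolding D_def by (auto simp: algebra_simps)
  have "\<theta>bar * (c1 - c2) \<ge> 0" "(1 - \<theta>bar) * (c1 - c2) \<ge> 0" using tb0 tb1 c12 by auto
  then have Db1: "c2 \<le> Db" "Db \<le> c1" unfolding Db_def by (auto simp: algebra_simps)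
  define p where "p = pi_mrc Cap c1 c2 N zs x \<theta>"
  define r where "r = pi_mmrc Cap c1 c2 \<theta>bar N zs x \<theta>"
  have Nth: "real N * \<theta> = real m" unfolding \<theta>_def using N0 by simp
  have Nth1: "real N * (1 - \<theta>) = real N - real m" unfolding \<theta>_def using N0 by (simp add: algebra_simps)
  have capm: "zs k \<in> Cap x \<Longrightarrow> k < N \<Longrightarrow> \<theta> > 0" for k
  proof -
    assume "zs k \<in> Cap x" "k < N"
    then have "k \<in> A" unfolding A_def by auto
    then have "m > 0" unfolding m_def using finA card_gt_0_iff by blast
    then show ?thesis unfolding \<theta>_def using N0 by auto
  qed
  have ncapm: "zs k \<notin> Cap x \<Longrightarrow> k < N \<Longrightarrow> \<theta> < 1" for k
  proof -
    assume "zs k \<notin> Cap x" "k < N"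
    then have "A \<subset> {..<N}" unfolding A_def by auto
    then have "card A < card {..<N}" by (intro psubset_card_mono) auto
    then have "m < N" unfolding m_def by simp
    then show ?thesis unfolding \<theta>_def using N0 by auto
  qed
  have ND: "real N * D > 0" using N0 D1 c2 by auto
  have pc: "p k = c1 / (real N * D)" if "zs k \<in> Cap x" for k
    using that unfolding p_def pi_mrc_def D_def by simp
  have pn: "p k = c2 / (real N * D)" if "zs k \<notin> Cap x" for k
    using that unfolding p_def pi_mrc_def D_def by simp
  have key: "p k > 0 \<and> r k > 0 \<and> p k / r k \<le> c1 / c2" if k: "k < N" for k
  proof (cases "zs k \<in> Cap x")
    case True
    have thp: "\<theta> > 0" using capm[OF True k] .
    have pk: "p k > 0" using pc[OF True] ND c2 c12 by auto
    consider "\<theta> = \<theta>bar" | "\<theta> < \<theta>bar" | "\<theta> > \<theta>bar" by linarith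
    then show ?thesis
    proof cases
      case 1
      then have "r k = p k" unfolding r_def p_def pi_mmrc_def by simp
      then show ?thesis using pk c2 c12 by simp
    next
      case 2
      then have rk: "r k = c1 / (real N * Db)" using True unfolding r_def pi_mmrc_def Db_def by simp
      have "p k / r k = Db / D" unfolding rk pc[OF True] using c2 c12 N0 D1 Db1 by (simp add: field_simps)
      also have "\<dots> \<le> c1 / c2" using D1 Db1 c2 by (intro frac_le) auto
      finally show ?thesis using pk rk c2 c12 N0 Db1 by simp
    next
      case 3
      define E where "E = \<theta>bar * c1 + (\<theta> - \<theta>bar) * c2"
      have E0: "E > 0" unfolding E_def using 3 tb0 c2 c12
        by (smt (verit) mult_nonneg_nonneg mult_pos_pos)
      have "r k = (1 - real N * (1 - \<theta>) * ((1 / real N) * (c2 / Db))) / (real N * \<theta>)"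
        using True 3 unfolding r_def pi_mmrc_def Db_def Let_def by simp
      also have "\<dots> = E / (real N * \<theta> * Db)"
      proof -
        have Ee: "E = Db - (1 - \<theta>) * c2" unfolding E_def Db_def by (simp add: algebra_simps)
        show ?thesis unfolding Ee using N0 Db1 c2 thp by (simp add: field_simps)
      qed
      finally have rk: "r k = E / (real N * \<theta> * Db)" .
      have rp: "r k > 0" unfolding rk using E0 N0 thp Db1 c2 by simp
      have pr: "p k / r k = (c1 * \<theta> * Db) / (D * E)" unfolding rk pc[OF True]
        using N0 thp Db1 c2 D1 E0 by (simp add: field_simps)
      have iden: "D * E - c2 * \<theta> * Db = (c1 - c2) * (\<theta> * \<theta>bar * c1 + ((\<theta> - \<theta>bar)^2 + \<theta>bar * (1 - \<theta>bar)) * c2)"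
        unfolding D_def E_def Db_def by (simp add: algebra_simps power2_eq_square)
      have "0 \<le> (c1 - c2) * (\<theta> * \<theta>bar * c1 + ((\<theta> - \<theta>bar)^2 + \<theta>bar * (1 - \<theta>bar)) * c2)"
        using c12 c2 th0 tb0 tb1 by (intro mult_nonneg_nonneg add_nonneg_nonneg) auto
      then have ineq: "c2 * \<theta> * Db \<le> D * E" using iden by linarith
      have "(c1 * \<theta> * Db) / (D * E) \<le> c1 / c2"
        using ineq c2 c12 D1 E0 by (simp add: divide_simps) (smt (verit) mult_left_mono mult.assoc mult.commute)
      then show ?thesis using pr pk rp by simp
    qed
  next
    case False
    have thl: "\<theta> < 1" using ncapm[OF False k] .
    have pk: "p k > 0" using pn[OF False] ND c2 by auto
    consider "\<theta> = \<theta>bar" | "\<theta> < \<theta>bar" | "\<theta> > \<theta>bar" by linarith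
    then show ?thesis
    proof cases
      case 1
      then have "r k = p k" unfolding r_def p_def pi_mmrc_def by simp
      then show ?thesis using pk c2 c12 by simp
    next
      case 3
      then have rk: "r k = c2 / (real N * Db)" using False unfolding r_def pi_mmrc_def Db_def by simp
      have "p k / r k = Db / D" unfolding rk pn[OF False] using c2 c12 N0 D1 Db1 by (simp add: field_simps)
      also have "\<dots> \<le> c1 / c2" using D1 Db1 c2 by (intro frac_le) auto
      finally show ?thesis using pk rk c2 c12 N0 Db1 by simp
    next
      case 2
      define E where "E = (\<theta>bar - \<theta>) * c1 + (1 - \<theta>bar) * c2"
      have E0: "E > 0" unfolding E_def using 2 tb1 c2 c12
        by (smt (verit) mult_nonneg_nonneg mult_pos_pos)
      have "r k = (1 - real N * \<theta> * ((1 / real N) * (c1 / Db))) / (real N * (1 - \<theta>))"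
        using False 2 unfolding r_def pi_mmrc_def Db_def Let_def by simp
      also have "\<dots> = E / (real N * (1 - \<theta>) * Db)"
      proof -
        have Ee: "E = Db - \<theta> * c1" unfolding E_def Db_def by (simp add: algebra_simps)
        show ?thesis unfolding Ee using N0 Db1 c2 thl by (simp add: field_simps)
      qed
      finally have rk: "r k = E / (real N * (1 - \<theta>) * Db)" .
      have rp: "r k > 0" unfolding rk using E0 N0 thl Db1 c2 by simp
      have pr: "p k / r k = (c2 * (1 - \<theta>) * Db) / (D * E)" unfolding rk pn[OF False]
        using N0 thl Db1 c2 D1 E0 by (simp add: field_simps)
      have iden: "D * E - c2 * (1 - \<theta>) * Db = \<theta> * (\<theta>bar - \<theta>) * c1 * (c1 - c2)"
        unfolding D_def E_def Db_def by (simp add: algebra_simps power2_eq_square)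
      have "0 \<le> \<theta> * (\<theta>bar - \<theta>) * c1 * (c1 - c2)"
        using c12 c2 th0 2 by (intro mult_nonneg_nonneg) auto
      then have ineq: "c2 * (1 - \<theta>) * Db \<le> D * E" using iden by linarith
      have "(c2 * (1 - \<theta>) * Db) / (D * E) \<le> 1"
        using ineq D1 E0 c2 by simp
      also have "1 \<le> c1 / c2" using c2 c12 by simp
      finally show ?thesis using pr pk rp by simp
    qed
  qed
  have sump: "sum p {..<N} = 1"
  proof -
    have "sum p {..<N} = (\<Sum>k\<in>{..<N}. if zs k \<in> Cap x then c1 / (real N * D) else c2 / (real N * D))"
      using pc pn by (intro sum.cong) auto
    also have "\<dots> = real (card A) * (c1 / (real N * D)) + real (card ({..<N} - A)) * (c2 / (real N * D))"
    proof -
      have e1: "{..<N} \<inter> {k. zs k \<in> Cap x} = A" unfolding A_def by auto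
      have e2: "{..<N} \<inter> - {k. zs k \<in> Cap x} = {..<N} - A" unfolding A_def by auto
      show ?thesis by (simp add: sum.If_cases e1 e2)
    qed
    also have "card ({..<N} - A) = N - m" unfolding m_def
      by (subst card_Diff_subset) (auto simp: A_def finA)
    also have "real (N - m) = real N - real m" using mN by simp
    also have "real (card A) * (c1 / (real N * D)) + (real N - real m) * (c2 / (real N * D))
        = (real m * c1 + (real N - real m) * c2) / (real N * D)"
      unfolding m_def by (simp add: add_divide_distrib[symmetric] algebra_simps)
    also have "real m * c1 + (real N - real m) * c2 = real N * D"
      unfolding D_def Nth[symmetric] Nth1[symmetric] by (simp add: algebra_simps)
    finally show ?thesis using N0 D1 c2 by simp
  qed
  have "kl_bits p r {..<N} \<le> log 2 (c1 / c2)"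
    using key sump c2 c12 by (intro kl_le) auto
  then show ?thesis using B unfolding p_def r_def \<theta>_def m_def A_def Let_def by linarith
qed

end
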